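(* For every integer $m\ge1$, the polynomials $G_m(t,\beta)$ satisfy: (i) for all $\beta\in\mathbb{R}$ and $t\neq0$, $t^{m-1}G_m\!\left(\frac1t,1-\beta\right)=G_m(t,\beta)$; (ii) for all $\beta>0$, $G_m(0,\beta)>0$ if $m$ is even and $G_m(0,\beta)<0$ if $m$ is odd; (iii) for all $0<\beta<\frac12$, $G_m(-1,\beta)<0$ if $m\equiv1,2\pmod 4$ and $G_m(-1,\beta)>0$ if $m\equiv0,3\pmod4$; (iv) for all $\frac12<\beta<1$, $G_m(-1,\beta)<0$ if $m\equiv0,1\pmod4$ and $G_m(-1,\beta)>0$ if $m\equiv2,3\pmod4$.
   Context: $G_1(t,\beta)=-1$ and for $m\ge2$, $G_m(t,\beta)=[\beta(t-1)-(m-1)t]G_{m-1}(t,\beta)+t(t-1)\frac{\partial}{\partial t}G_{m-1}(t,\beta)$. *)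

theory Defs
  imports "HOL-Computational_Algebra.Polynomial"
begin

text \<open>For fixed beta, Gpoly m beta is G_m(t,beta) as a polynomial in t.
  G_1 = -1;  G_m = [beta(t-1) - (m-1) t] G_(m-1) + t(t-1) d/dt G_(m-1)  (m >= 2).
  The value at m = 0 is an unused dummy.\<close>
fun Gpoly :: "nat \<Rightarrow> real \<Rightarrow> real poly" where
  "Gpoly 0 \<beta> = 0"
| "Gpoly (Suc 0) \<beta> = [:-1:]"
| "Gpoly (Suc (Suc k)) \<beta> =
     [:-\<beta>, \<beta> - real (Suc k):] * Gpoly (Suc k) \<beta>
     + [:0, -1, 1:] * pderiv (Gpoly (Suc k) \<beta>)"

definition G :: "nat \<Rightarrow> real \<Rightarrow> real \<Rightarrow> real" where
  "G m t \<beta> = poly (Gpoly m \<beta>) t"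

end

theory Submission
  imports Defs
begin


fun Q :: "nat \<Rightarrow> real poly poly" where
  "Q 0 = 0"
| "Q (Suc 0) = [:-1:]"
| "Q (Suc (Suc k)) = [:-[:0,1:], [:0,1:] - of_nat (Suc k):] * Q (Suc k)
     + [:0, -1, 1:] * pderiv (Q (Suc k))"

definition ev :: "real \<Rightarrow> real poly poly \<Rightarrow> real poly" where
  "ev b R = map_poly (\<lambda>c. poly c b) R"

lemma coeff_ev: "coeff (ev b R) n = poly (coeff R n) b"
  by (simp add: ev_def coeff_map_poly)

lemma ev_add: "ev b (p + q) = ev b p + ev b q"
  by (rule poly_eqI) (simp add: coeff_ev)

lemma ev_mult: "ev b (p * q) = ev b p * ev b q"
  by (rule poly_eqI) (simp add: coeff_ev coeff_mult poly_sum)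

lemma ev_pderiv: "ev b (pderiv p) = pderiv (ev b p)"
  by (rule poly_eqI) (simp add: coeff_ev coeff_pderiv)

lemma ev_pCons: "ev b (pCons a p) = pCons (poly a b) (ev b p)"
  by (simp add: ev_def map_poly_pCons)

lemma ev_0[simp]: "ev b 0 = 0" by (simp add: ev_def)

lemma ev_A: "ev b [:-[:0,1:], [:0,1:] - of_nat (Suc k):] = [:-b, b - real (Suc k):]"
  by (simp add: ev_pCons of_nat_poly)

lemma ev_B: "ev b [:0, -1, 1:] = [:0, -1, 1:]"
  by (simp add: ev_pCons)

lemma Gpoly_ev: "Gpoly m b = ev b (Q m)"
proof (induction m rule: Q.induct)
  case (3 k)
  show ?case
    by (simp only: Gpoly.simps Q.simps ev_add ev_mult ev_pderiv ev_A ev_B 3)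
qed (simp_all add: ev_pCons)

lemma poly_ev: "poly (ev b R) t = poly (poly R [:t:]) b"
  by (induction R) (simp_all add: ev_pCons)

definition D :: "real poly poly \<Rightarrow> real poly poly" where
  "D R = map_poly pderiv R"

lemma coeff_D: "coeff (D R) n = pderiv (coeff R n)"
  by (simp add: D_def coeff_map_poly)

lemma D_add: "D (p + q) = D p + D q"
  by (rule poly_eqI) (simp add: coeff_D pderiv_add)

lemma pderiv_sum': "pderiv (sum f A) = (\<Sum>x\<in>A. pderiv (f x))"
  by (induction A rule: infinite_finite_induct) (simp_all add: pderiv_add)

lemma D_mult: "D (p * q) = D p * q + p * D q"
proof (rule poly_eqI)
  fix n
  have "coeff (D (p * q)) n = (\<Sum>i\<le>n. pderiv (coeff p i * coeff q (n - i)))"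
    by (simp add: coeff_D coeff_mult pderiv_sum')
  also have "\<dots> = (\<Sum>i\<le>n. pderiv (coeff p i) * coeff q (n - i))
      + (\<Sum>i\<le>n. coeff p i * pderiv (coeff q (n - i)))"
    by (simp add: pderiv_mult sum.distrib[symmetric] algebra_simps)
  also have "\<dots> = coeff (D p * q + p * D q) n"
    by (simp add: coeff_D coeff_mult)
  finally show "coeff (D (p * q)) n = coeff (D p * q + p * D q) n" .
qed

lemma D_pderiv: "D (pderiv p) = pderiv (D p)"
  by (rule poly_eqI) (simp add: coeff_D coeff_pderiv pderiv_mult of_nat_poly pderiv_smult)

lemma D_pCons: "D (pCons a p) = pCons (pderiv a) (D p)"
  by (simp add: D_def map_poly_pCons)

lemma D_0[simp]: "D 0 = 0" by (simp add: D_def)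

lemma pderiv_poly_const: "pderiv (poly R [:c:]) = poly (D R) [:c:]"
  by (induction R) (simp_all add: D_pCons pderiv_add pderiv_mult pderiv_pCons pderiv_smult)

lemma key_id: "[:-[:0,1:], [:0,1:] - of_nat (Suc (Suc j)):] * [:-1, 1:] + [:0, -1, 1:]
   = [:-1, 1:] * ([:-[:0,1:], [:0,1:] - of_nat (Suc j):] :: real poly poly)"
  by (simp add: of_nat_poly algebra_simps one_pCons)

lemma D_A: "D [:-[:0,1:], [:0,1:] - of_nat (Suc k):] = [:-1, 1:]"
  by (simp add: D_pCons pderiv_pCons pderiv_diff of_nat_poly one_pCons)

lemma D_B: "D [:0, -1, 1:] = 0"
  by (simp add: D_pCons one_pCons)

lemma ring_step:
  fixes A B C A' Q0 P0 k :: "'a::comm_ring_1"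
  assumes "A*C + B = C*A'"
  shows "A * (k * (C*Q0)) + B*(k*(C*P0 + Q0)) = k*(C*(A'*Q0 + B*P0))"
proof -
  have "A * (k * (C*Q0)) + B*(k*(C*P0 + Q0)) = k*((A*C + B)*Q0 + C*B*P0)"
    by (simp add: algebra_simps)
  also have "\<dots> = k*(C*(A'*Q0 + B*P0))" using assms by (simp add: algebra_simps)
  finally show ?thesis .
qed

lemma D_Q: "D (Q (Suc n)) = of_nat n * ([:-1, 1:] * Q n)"
proof (induction n)
  case 0 then show ?case by (simp add: D_pCons one_pCons)
next
  case (Suc k)
  show ?case
  proof (cases k)
    case 0
    then show ?thesis by (simp add: D_add D_mult D_A D_B D_pderiv D_pCons pderiv_pCons pderiv_diff one_pCons)
  next
    case (Suc j)
    let ?A = "[:-[:0,1:], [:0,1:] - of_nat (Suc (Suc j)):] :: real poly poly"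
    let ?A' = "[:-[:0,1:], [:0,1:] - of_nat (Suc j):] :: real poly poly"
    let ?B = "[:0, -1, 1:] :: real poly poly"
    let ?C = "[:-1, 1:] :: real poly poly"
    have pC: "pderiv ?C = 1" by (simp add: pderiv_pCons one_pCons)
    have IH: "D (Q (Suc k)) = of_nat k * (?C * Q k)" by fact
    have "D (Q (Suc (Suc k))) = ?C * Q (Suc k) + ?A * D (Q (Suc k)) + ?B * pderiv (D (Q (Suc k)))"
      using Suc by (simp only: Q.simps D_add D_mult D_A D_B D_pderiv)
    also have "\<dots> = ?C * Q (Suc k) + (?A * (of_nat k * (?C * Q k)) + ?B * (of_nat k * (?C * pderiv (Q k) + Q k)))"
      by (simp only: IH pderiv_mult pC pderiv_of_nat mult_zero_right add_0 mult_1_right add.commute add.assoc)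
    also have "\<dots> = ?C * Q (Suc k) + of_nat k * (?C * (?A' * Q k + ?B * pderiv (Q k)))"
      using Suc by (simp only: ring_step[OF key_id])
    also have "\<dots> = ?C * Q (Suc k) + of_nat k * (?C * Q (Suc k))"
      using Suc by (simp only: Q.simps)
    also have "\<dots> = of_nat (Suc k) * (?C * Q (Suc k))"
      by (simp only: of_nat_Suc ring_distribs mult_1_left add.commute)
    finally show ?thesis .
  qed
qed



lemma deriv_aux:
  fixes h :: "real poly" assumes t: "t \<noteq> 0"
  shows "((\<lambda>s. s^k * poly h (1/s)) has_real_derivative
     (real k * t^(k-1) * poly h (1/t) - t^k * poly (pderiv h) (1/t) / t^2)) (at t)"
  using t by (auto intro!: derivative_eq_intros simp: field_simps power2_eq_square)

lemma sym_step:
  fixes g h :: "real poly" and T H H' g0 g1 t \<beta> :: real and k :: nat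
  assumes t: "t \<noteq> 0" and gT: "g0 = T * H" and g1: "t * g1 = real k * T * H - T * H' / t"
  shows "t * T * ((-(1-\<beta>) + ((1-\<beta>) - (real k + 1)) * (1/t)) * H + (1/t) * (-1 + 1/t) * H')
     = (-\<beta> + (\<beta> - (real k + 1)) * t) * g0 + t * (-1 + t) * g1"
proof -
  have "t * (-1 + t) * g1 = (-1 + t) * (t * g1)" by simp
  also have "\<dots> = (-1 + t) * (real k * T * H - T * H' / t)" by (simp only: g1)
  finally have e: "t * (-1 + t) * g1 = (-1 + t) * (real k * T * H - T * H' / t)" .
  show ?thesis unfolding e gT using t by (simp add: field_simps)
qed

lemma Gsym: "t \<noteq> 0 \<Longrightarrow> t ^ k * poly (Gpoly (Suc k) (1 - \<beta>)) (1 / t) = poly (Gpoly (Suc k) \<beta>) t"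
proof (induction k arbitrary: \<beta> t)
  case 0 then show ?case by simp
next
  case (Suc k)
  define h where "h = Gpoly (Suc k) (1 - \<beta>)"
  define g where "g = Gpoly (Suc k) \<beta>"
  have t: "t \<noteq> 0" by fact
  have eq: "\<And>s. s \<in> -{0} \<Longrightarrow> s^k * poly h (1/s) = poly g s"
    using Suc.IH unfolding h_def g_def by auto
  have d: "(poly g has_real_derivative
     (real k * t^(k-1) * poly h (1/t) - t^k * poly (pderiv h) (1/t) / t^2)) (at t)"
    proof (rule has_field_derivative_transform_within_open[OF deriv_aux[OF t]])
    show "open (-{0::real})" by auto
    show "t \<in> -{0}" using t by auto
    show "\<And>s. s \<in> -{0} \<Longrightarrow> s^k * poly h (1/s) = poly g s" by (rule eq)
  qed
  have "poly (pderiv g) t = real k * t^(k-1) * poly h (1/t) - t^k * poly (pderiv h) (1/t) / t^2"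
    using DERIV_unique[OF poly_DERIV d] .
  moreover have "t * (real k * t^(k-1)) = real k * t^k" by (cases k) auto
  ultimately have g1: "t * poly (pderiv g) t = real k * t^k * poly h (1/t) - t^k * poly (pderiv h) (1/t) / t"
    using t by (simp add: field_simps power2_eq_square) blast
  have g0: "poly g t = t^k * poly h (1/t)" using eq t by auto
  have "t ^ Suc k * poly (Gpoly (Suc (Suc k)) (1 - \<beta>)) (1 / t)
     = t * t^k * ((-(1-\<beta>) + ((1-\<beta>) - (real k + 1)) * (1/t)) * poly h (1/t) + (1/t) * (-1 + 1/t) * poly (pderiv h) (1/t))"
    unfolding h_def by (simp add: algebra_simps)
  also have "\<dots> = (-\<beta> + (\<beta> - (real k + 1)) * t) * poly g t + t * (-1 + t) * poly (pderiv g) t"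
    by (rule sym_step[OF t g0 g1])
  also have "\<dots> = poly (Gpoly (Suc (Suc k)) \<beta>) t"
    unfolding g_def by (simp add: algebra_simps)
  finally show ?case .
qed



lemma G_at0: "poly (Gpoly (Suc k) \<beta>) 0 = - ((-\<beta>) ^ k)"
  by (induction k) auto

lemma ring_step2:
  fixes a a' B X A P :: "'a::comm_ring_1"
  assumes "a * X + B = X * a'"
  shows "a * (X * A) + B * (X * P + A) = X * (a' * A + B * P)"
proof -
  have "a * (X * A) + B * (X * P + A) = (a * X + B) * A + X * B * P" by (simp add: algebra_simps)
  also have "\<dots> = X * (a' * A + B * P)" using assms by (simp add: algebra_simps)
  finally show ?thesis .
qed

lemma shift_id: "[:-0, 0 - real (Suc (Suc k)):] * [:0, 1:] + [:0, -1, 1:]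
   = [:0, 1:] * ([:-1, 1 - real (Suc (Suc k)):] :: real poly)"
  by (simp add: algebra_simps one_pCons)

lemma Gshift: "Gpoly (Suc (Suc k)) 0 = [:0, 1:] * Gpoly (Suc (Suc k)) 1"
proof (induction k)
  case 0 then show ?case by (simp add: one_pCons)
next
  case (Suc k)
  let ?A = "Gpoly (Suc (Suc k)) 1"
  have pX: "pderiv [:0, 1::real:] = 1" by (simp add: pderiv_pCons one_pCons)
  have "Gpoly (Suc (Suc (Suc k))) 0 = [:-0, 0 - real (Suc (Suc k)):] * ([:0, 1:] * ?A)
       + [:0, -1, 1:] * ([:0, 1:] * pderiv ?A + ?A)"
    by (simp only: Gpoly.simps(3)[of "Suc k" 0] Suc.IH pderiv_mult pX mult_1_right)
  also have "\<dots> = [:0, 1:] * ([:-1, 1 - real (Suc (Suc k)):] * ?A + [:0, -1, 1:] * pderiv ?A)"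
    by (rule ring_step2[OF shift_id])
  also have "\<dots> = [:0, 1:] * Gpoly (Suc (Suc (Suc k))) 1"
    by (simp only: Gpoly.simps(3)[of "Suc k" 1])
  finally show ?case .
qed

definition E :: "nat \<Rightarrow> real poly" where "E m = poly (Q m) [:-1:]"

lemma G_E: "G m (-1) b = poly (E m) b"
  by (simp add: G_def E_def Gpoly_ev poly_ev)

lemma pderiv_E: "poly (pderiv (E (Suc n))) x = -2 * real n * poly (E n) x"
  by (simp add: E_def pderiv_poly_const D_Q of_nat_poly one_pCons)

lemma DERIV_P: "((\<lambda>b. G (Suc n) (-1) b) has_real_derivative (-2 * real n * G n (-1) x)) (at x)"
  unfolding G_E using poly_DERIV[of "E (Suc n)" x] by (simp only: pderiv_E)

lemma P_sym: "G (Suc k) (-1) (1 - \<beta>) = (-1)^k * G (Suc k) (-1) \<beta>"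
proof -
  have h: "(-1)^k * G (Suc k) (-1) (1 - \<beta>) = G (Suc k) (-1) \<beta>"
    using Gsym[of "-1" k \<beta>] unfolding G_def by simp
  have "(-1::real)^k * (-1)^k = 1" by (simp flip: power_add)
  then have "G (Suc k) (-1) (1 - \<beta>) = (-1)^k * ((-1)^k * G (Suc k) (-1) (1 - \<beta>))"
    by (simp add: mult.assoc[symmetric])
  then show ?thesis using h by simp
qed

lemma P_zero: assumes "odd k" shows "G (Suc (Suc k)) (-1) 0 = 0"
proof -
  have a: "G (Suc (Suc k)) (-1) 0 = - G (Suc (Suc k)) (-1) 1"
    unfolding G_def by (simp del: Gpoly.simps add: Gshift)
  have b: "G (Suc (Suc k)) (-1) 0 = G (Suc (Suc k)) (-1) 1"
    using P_sym[of "Suc k" 1] assms by simp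
  from a b show ?thesis by simp
qed



definition sl :: "nat \<Rightarrow> real" where "sl m = (if m mod 4 \<in> {1, 2} then -1 else 1)"
definition sr :: "nat \<Rightarrow> real" where "sr m = (if m mod 4 \<in> {0, 1} then -1 else 1)"

lemma sl_sr_odd: "odd n \<Longrightarrow> sl (Suc n) = sl n \<and> sr (Suc n) = - sr n"
proof -
  assume "odd n"
  then have "n mod 4 = 1 \<or> n mod 4 = 3" by presburger
  then show ?thesis unfolding sl_def sr_def by (auto simp: mod_Suc)
qed

lemma sl_sr_even: "even n \<Longrightarrow> sl (Suc n) = - sl n \<and> sr (Suc n) = sr n"
proof -
  assume "even n"
  then have "n mod 4 = 0 \<or> n mod 4 = 2" by presburger
  then show ?thesis unfolding sl_def sr_def by (auto simp: mod_Suc)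
qed

lemma mvt:
  assumes "a < b"
  shows "\<exists>z. a < z \<and> z < b \<and> G (Suc n) (-1) b - G (Suc n) (-1) a = (b - a) * (-2 * real n * G n (-1) z)"
  using MVT2[OF assms, of "\<lambda>b. G (Suc n) (-1) b" "\<lambda>x. -2 * real n * G n (-1) x"] DERIV_P by blast

lemma signs:
  assumes "m \<ge> 1"
  shows "(\<forall>b. 0 < b \<and> b < 1/2 \<longrightarrow> sl m * G m (-1) b > 0) \<and> (\<forall>b. 1/2 < b \<and> b < 1 \<longrightarrow> sr m * G m (-1) b > 0)"
  using assms
proof (induction m rule: nat_induct_at_least)
  case base
  then show ?case by (simp add: sl_def sr_def G_def)
next
  case (Suc n)
  have IHl: "\<And>z. 0 < z \<Longrightarrow> z < 1/2 \<Longrightarrow> sl n * G n (-1) z > 0" using Suc.IH by blast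
  have IHr: "\<And>z. 1/2 < z \<Longrightarrow> z < 1 \<Longrightarrow> sr n * G n (-1) z > 0" using Suc.IH by blast
  have n: "real n > 0" using Suc.hyps by simp
  show ?case
  proof (cases "odd n")
    case True
    have h0: "G (Suc n) (-1) (1/2) = 0"
      using P_sym[of n "1/2"] True by simp
    have s: "sl (Suc n) = sl n" "sr (Suc n) = - sr n" using sl_sr_odd[OF True] by auto
    show ?thesis
    proof (intro conjI allI impI)
      fix b :: real assume b: "0 < b \<and> b < 1/2"
      then obtain z where z: "b < z" "z < 1/2"
        "G (Suc n) (-1) (1/2) - G (Suc n) (-1) b = (1/2 - b) * (-2 * real n * G n (-1) z)"
        using mvt[of b "1/2" n] by auto
      have e: "G (Suc n) (-1) b = (1/2 - b) * (2 * real n) * G n (-1) z"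
        using z(3) h0 by (simp add: algebra_simps)
      have "sl (Suc n) * G (Suc n) (-1) b = (1/2 - b) * (2 * real n) * (sl n * G n (-1) z)"
        unfolding e s by (simp add: algebra_simps)
      moreover have "sl n * G n (-1) z > 0" using IHl[of z] b z by auto
      ultimately show "sl (Suc n) * G (Suc n) (-1) b > 0" using b n by simp
    next
      fix b :: real assume b: "1/2 < b \<and> b < 1"
      then obtain z where z: "1/2 < z" "z < b"
        "G (Suc n) (-1) b - G (Suc n) (-1) (1/2) = (b - 1/2) * (-2 * real n * G n (-1) z)"
        using mvt[of "1/2" b n] by auto
      have e: "G (Suc n) (-1) b = - (b - 1/2) * (2 * real n) * G n (-1) z"
        using z(3) h0 by (simp add: algebra_simps)
      have "sr (Suc n) * G (Suc n) (-1) b = (b - 1/2) * (2 * real n) * (sr n * G n (-1) z)"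
        unfolding e s by (simp add: algebra_simps)
      moreover have "sr n * G n (-1) z > 0" using IHr[of z] b z by auto
      ultimately show "sr (Suc n) * G (Suc n) (-1) b > 0" using b n by simp
    qed
  next
    case False
    then have ev: "even n" by simp
    then obtain k where k: "n = Suc k" "odd k" using Suc.hyps
    proof -
      have "n = Suc (n - 1)" using Suc.hyps by simp
      moreover have "odd (n - 1)" using ev Suc.hyps by presburger
      ultimately show ?thesis using that by blast
    qed
    have h0: "G (Suc n) (-1) 0 = 0" using P_zero[OF k(2)] k(1) by simp
    have h1: "G (Suc n) (-1) 1 = 0" using P_sym[of n 0] h0 by simp
    have s: "sl (Suc n) = - sl n" "sr (Suc n) = sr n" using sl_sr_even[OF ev] by auto
    show ?thesis
    proof (intro conjI allI impI)
      fix b :: real assume b: "0 < b \<and> b < 1/2"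
      then obtain z where z: "0 < z" "z < b"
        "G (Suc n) (-1) b - G (Suc n) (-1) 0 = (b - 0) * (-2 * real n * G n (-1) z)"
        using mvt[of 0 b n] by auto
      have e: "G (Suc n) (-1) b = - b * (2 * real n) * G n (-1) z"
        using z(3) h0 by (simp add: algebra_simps)
      have "sl (Suc n) * G (Suc n) (-1) b = b * (2 * real n) * (sl n * G n (-1) z)"
        unfolding e s by (simp add: algebra_simps)
      moreover have "sl n * G n (-1) z > 0" using IHl[of z] b z by auto
      ultimately show "sl (Suc n) * G (Suc n) (-1) b > 0" using b n by simp
    next
      fix b :: real assume b: "1/2 < b \<and> b < 1"
      then obtain z where z: "b < z" "z < 1"
        "G (Suc n) (-1) 1 - G (Suc n) (-1) b = (1 - b) * (-2 * real n * G n (-1) z)"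
        using mvt[of b 1 n] by auto
      have e: "G (Suc n) (-1) b = (1 - b) * (2 * real n) * G n (-1) z"
        using z(3) h1 by (simp add: algebra_simps)
      have "sr (Suc n) * G (Suc n) (-1) b = (1 - b) * (2 * real n) * (sr n * G n (-1) z)"
        unfolding e s by (simp add: algebra_simps)
      moreover have "sr n * G n (-1) z > 0" using IHr[of z] b z by auto
      ultimately show "sr (Suc n) * G (Suc n) (-1) b > 0" using b n by simp
    qed
  qed
qed

theorem lemma4p6:
  fixes m :: nat
  assumes "m \<ge> 1"
  shows "(\<forall>\<beta> t::real. t \<noteq> 0 \<longrightarrow> t ^ (m - 1) * G m (1 / t) (1 - \<beta>) = G m t \<beta>)
    \<and> (\<forall>\<beta>::real. \<beta> > 0 \<longrightarrow> (even m \<longrightarrow> G m 0 \<beta> > 0) \<and> (odd m \<longrightarrow> G m 0 \<beta> < 0))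
    \<and> (\<forall>\<beta>::real. 0 < \<beta> \<and> \<beta> < 1/2 \<longrightarrow>
         (m mod 4 \<in> {1, 2} \<longrightarrow> G m (-1) \<beta> < 0) \<and> (m mod 4 \<in> {0, 3} \<longrightarrow> G m (-1) \<beta> > 0))
    \<and> (\<forall>\<beta>::real. 1/2 < \<beta> \<and> \<beta> < 1 \<longrightarrow>
         (m mod 4 \<in> {0, 1} \<longrightarrow> G m (-1) \<beta> < 0) \<and> (m mod 4 \<in> {2, 3} \<longrightarrow> G m (-1) \<beta> > 0))"
proof -
  obtain k where m: "m = Suc k" using assms by (cases m) auto
  have i: "\<forall>\<beta> t::real. t \<noteq> 0 \<longrightarrow> t ^ (m - 1) * G m (1 / t) (1 - \<beta>) = G m t \<beta>"
    using Gsym unfolding G_def m by simp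
  have ii: "\<forall>\<beta>::real. \<beta> > 0 \<longrightarrow> (even m \<longrightarrow> G m 0 \<beta> > 0) \<and> (odd m \<longrightarrow> G m 0 \<beta> < 0)"
  proof (intro allI impI conjI)
    fix \<beta> :: real assume b: "\<beta> > 0"
    have g: "G m 0 \<beta> = - ((-\<beta>) ^ k)" unfolding G_def m by (rule G_at0)
    have p: "\<beta> ^ k > 0" using b by simp
    show "even m \<Longrightarrow> G m 0 \<beta> > 0"
    proof -
      assume "even m" then have "odd k" using m by simp
      then have "(-\<beta>) ^ k = - (\<beta> ^ k)" by (simp add: power_minus_odd)
      then show ?thesis using g p by simp
    qed
    show "odd m \<Longrightarrow> G m 0 \<beta> < 0"
    proof -
      assume "odd m" then have "even k" using m by simp
      then have "(-\<beta>) ^ k = \<beta> ^ k" by (simp add: power_minus_even)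
      then show ?thesis using g p by simp
    qed
  qed
  have S: "(\<forall>b. 0 < b \<and> b < 1/2 \<longrightarrow> sl m * G m (-1) b > 0) \<and> (\<forall>b. 1/2 < b \<and> b < 1 \<longrightarrow> sr m * G m (-1) b > 0)"
    by (rule signs[OF assms])
  have iii: "\<forall>\<beta>::real. 0 < \<beta> \<and> \<beta> < 1/2 \<longrightarrow>
         (m mod 4 \<in> {1, 2} \<longrightarrow> G m (-1) \<beta> < 0) \<and> (m mod 4 \<in> {0, 3} \<longrightarrow> G m (-1) \<beta> > 0)"
  proof (intro allI impI conjI)
    fix \<beta> :: real assume b: "0 < \<beta> \<and> \<beta> < 1/2"
    then have "sl m * G m (-1) \<beta> > 0" using S by blast
    then show "m mod 4 \<in> {1, 2} \<Longrightarrow> G m (-1) \<beta> < 0" "m mod 4 \<in> {0, 3} \<Longrightarrow> G m (-1) \<beta> > 0"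
      unfolding sl_def by auto
  qed
  have iv: "\<forall>\<beta>::real. 1/2 < \<beta> \<and> \<beta> < 1 \<longrightarrow>
         (m mod 4 \<in> {0, 1} \<longrightarrow> G m (-1) \<beta> < 0) \<and> (m mod 4 \<in> {2, 3} \<longrightarrow> G m (-1) \<beta> > 0)"
  proof (intro allI impI conjI)
    fix \<beta> :: real assume b: "1/2 < \<beta> \<and> \<beta> < 1"
    then have "sr m * G m (-1) \<beta> > 0" using S by blast
    then show "m mod 4 \<in> {0, 1} \<Longrightarrow> G m (-1) \<beta> < 0" "m mod 4 \<in> {2, 3} \<Longrightarrow> G m (-1) \<beta> > 0"
      unfolding sr_def by auto
  qed
  show ?thesis using i ii iii iv by blast
qed

end
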